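(* Let $G$ be a cubic graph with a bridge $e$, and let $H_1$ and $H_2$ be the components of $G-e$. Then $c_2(G)=c_2(H_1)+c_2(H_2)$.
   Context: For a graph $G=(V,E)$ and a set $S_0\subseteq V$, the irreversible $2$-threshold conversion process is defined by: for $t=1,2,\dots$, $S_t$ is obtained from $S_{t-1}$ by adjoining all vertices having at least $2$ neighbours in $S_{t-1}$. $S_0$ is a $2$-conversion set if $S_t=V$ for some $t\ge 0$, and $c_2(G)$ is the minimum size of a $2$-conversion set of $G$ (defined for any graph, not only cubic ones). *)

theory Defs
  imports Main
begin

definition simple_graph :: "'a set \<Rightarrow> 'a set set \<Rightarrow> bool" where
  "simple_graph V E \<longleftrightarrow> finite V \<and>
     (\<forall>e\<in>E. \<exists>u v. e = {u, v} \<and> u \<noteq> v \<and> u \<in> V \<and> v \<in> V)"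

definition degree :: "'a set \<Rightarrow> 'a set set \<Rightarrow> 'a \<Rightarrow> nat" where
  "degree V E v = card {u\<in>V. {u, v} \<in> E}"

definition cubic :: "'a set \<Rightarrow> 'a set set \<Rightarrow> bool" where
  "cubic V E \<longleftrightarrow> simple_graph V E \<and> (\<forall>v\<in>V. degree V E v = 3)"

definition adj :: "'a set \<Rightarrow> 'a set set \<Rightarrow> 'a \<Rightarrow> 'a \<Rightarrow> bool" where
  "adj V E u v \<longleftrightarrow> u \<in> V \<and> v \<in> V \<and> {u, v} \<in> E"

definition reachable :: "'a set \<Rightarrow> 'a set set \<Rightarrow> 'a \<Rightarrow> 'a \<Rightarrow> bool" where
  "reachable V E u v \<longleftrightarrow> u \<in> V \<and> (adj V E)\<^sup>*\<^sup>* u v"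

definition components :: "'a set \<Rightarrow> 'a set set \<Rightarrow> 'a set set" where
  "components V E = {{y. reachable V E x y} | x. x \<in> V}"

definition is_bridge :: "'a set \<Rightarrow> 'a set set \<Rightarrow> 'a set \<Rightarrow> bool" where
  "is_bridge V E e \<longleftrightarrow> e \<in> E \<and> card (components V (E - {e})) > card (components V E)"

definition induced_edges :: "'a set set \<Rightarrow> 'a set \<Rightarrow> 'a set set" where
  "induced_edges E C = {f \<in> E. f \<subseteq> C}"

definition conv_step :: "'a set \<Rightarrow> 'a set set \<Rightarrow> 'a set \<Rightarrow> 'a set" where
  "conv_step V E S = S \<union> {v\<in>V. card {u\<in>S. {u, v} \<in> E} \<ge> 2}"

definition is_2_conversion_set :: "'a set \<Rightarrow> 'a set set \<Rightarrow> 'a set \<Rightarrow> bool" where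
  "is_2_conversion_set V E S \<longleftrightarrow> S \<subseteq> V \<and> (\<exists>t. (conv_step V E ^^ t) S = V)"

definition c2 :: "'a set \<Rightarrow> 'a set set \<Rightarrow> nat" where
  "c2 V E = (LEAST n. \<exists>S. is_2_conversion_set V E S \<and> card S = n)"

end

theory Submission
  imports Defs
begin



definition blocking :: "'a set \<Rightarrow> 'a set set \<Rightarrow> 'a set \<Rightarrow> 'a set \<Rightarrow> bool" where
  "blocking V E S U \<longleftrightarrow> U \<noteq> {} \<and> U \<subseteq> V - S \<and> (\<forall>v\<in>U. card {u\<in>V - U. {u,v} \<in> E} \<le> 1)"

lemma conv_step_sub: "S \<subseteq> V \<Longrightarrow> conv_step V E S \<subseteq> V"
  by (auto simp: conv_step_def)

lemma conv_iter_sub: "S \<subseteq> V \<Longrightarrow> (conv_step V E ^^ t) S \<subseteq> V"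
  by (induction t) (auto simp: conv_step_def)

lemma conv_step_mono_incr: "S \<subseteq> conv_step V E S" by (auto simp: conv_step_def)

lemma blocking_avoid:
  assumes fin: "finite V" and b: "blocking V E S U" and SV: "S \<subseteq> V"
  shows "(conv_step V E ^^ t) S \<inter> U = {}"
proof (induction t)
  case 0 then show ?case using b by (auto simp: blocking_def)
next
  case (Suc t)
  define T where "T = (conv_step V E ^^ t) S"
  have TV: "T \<subseteq> V" using conv_iter_sub[OF SV] T_def by blast
  have TU: "T \<inter> U = {}" using Suc T_def by simp
  have "\<forall>v\<in>U. card {u\<in>T. {u,v} \<in> E} < 2"
  proof
    fix v assume v: "v \<in> U"
    have "{u\<in>T. {u,v} \<in> E} \<subseteq> {u\<in>V - U. {u,v} \<in> E}" using TV TU by blast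
    then have "card {u\<in>T. {u,v} \<in> E} \<le> card {u\<in>V - U. {u,v} \<in> E}"
      by (intro card_mono) (use fin in auto)
    also have "\<dots> \<le> 1" using b v by (auto simp: blocking_def)
    finally show "card {u\<in>T. {u,v} \<in> E} < 2" by simp
  qed
  then have "conv_step V E T \<inter> U = {}" using TU by (auto simp: conv_step_def)
  then show ?case by (simp add: T_def)
qed

lemma blocking_not_conv:
  assumes "finite V" "blocking V E S U" "S \<subseteq> V"
  shows "\<not> is_2_conversion_set V E S"
proof
  assume "is_2_conversion_set V E S"
  then obtain t where "(conv_step V E ^^ t) S = V" by (auto simp: is_2_conversion_set_def)
  moreover have "U \<subseteq> V" "U \<noteq> {}" using assms(2) by (auto simp: blocking_def)
  ultimately show False using blocking_avoid[OF assms, of t] by blast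
qed


lemma iter_card:
  assumes fin: "finite V" and SV: "S \<subseteq> V"
    and ne: "\<forall>t. (conv_step V E ^^ Suc t) S \<noteq> (conv_step V E ^^ t) S"
  shows "card ((conv_step V E ^^ t) S) \<ge> t"
proof (induction t)
  case 0 show ?case by simp
next
  case (Suc t)
  let ?T = "(conv_step V E ^^ t) S"
  have "?T \<subseteq> conv_step V E ?T" by (rule conv_step_mono_incr)
  moreover have "conv_step V E ?T \<noteq> ?T" using ne[rule_format, of t] by simp
  ultimately have ps: "?T \<subset> conv_step V E ?T" by blast
  have fin': "finite (conv_step V E ?T)"
    using finite_subset[OF conv_step_sub[OF conv_iter_sub[OF SV]] fin] .
  have "card ?T < card (conv_step V E ?T)" using psubset_card_mono[OF fin' ps] .
  then have "Suc t \<le> card (conv_step V E ?T)" using Suc.IH by linarith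
  then show ?case by simp
qed

lemma not_conv_blocking:
  assumes fin: "finite V" and SV: "S \<subseteq> V" and nc: "\<not> is_2_conversion_set V E S"
  shows "\<exists>U. blocking V E S U"
proof -
  have "\<exists>t. (conv_step V E ^^ Suc t) S = (conv_step V E ^^ t) S"
  proof (rule ccontr)
    assume "\<not> ?thesis"
    then have "card ((conv_step V E ^^ Suc (card V)) S) \<ge> Suc (card V)"
      using iter_card[OF fin SV] by blast
    moreover have "card ((conv_step V E ^^ Suc (card V)) S) \<le> card V"
      using card_mono[OF fin conv_iter_sub[OF SV]] by blast
    ultimately show False by simp
  qed
  then obtain t where fx: "conv_step V E ((conv_step V E ^^ t) S) = (conv_step V E ^^ t) S" by auto
  define T where "T = (conv_step V E ^^ t) S"
  have TV: "T \<subseteq> V" using conv_iter_sub[OF SV] T_def by blast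
  have TneV: "T \<noteq> V"
  proof
    assume "T = V"
    then have "is_2_conversion_set V E S" unfolding is_2_conversion_set_def T_def using SV by blast
    then show False using nc by blast
  qed
  have ST: "S \<subseteq> T"
  proof -
    have "S \<subseteq> (conv_step V E ^^ n) S" for n
    proof (induction n)
      case 0 then show ?case by simp
    next
      case (Suc n)
      have "(conv_step V E ^^ n) S \<subseteq> (conv_step V E ^^ Suc n) S"
        by (simp add: conv_step_mono_incr)
      then show ?case using Suc.IH by (rule subset_trans[rotated])
    qed
    then show ?thesis using T_def by blast
  qed
  have fixT: "conv_step V E T = T" using fx unfolding T_def .
  have "blocking V E S (V - T)"
    unfolding blocking_def
  proof (intro conjI ballI)
    show "V - T \<noteq> {}" using TV TneV by blast
    show "V - T \<subseteq> V - S" using ST by blast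
    fix v assume v: "v \<in> V - T"
    have eq: "{u \<in> V - (V - T). {u, v} \<in> E} = {u\<in>T. {u,v} \<in> E}" using TV by blast
    have "\<not> 2 \<le> card {u\<in>T. {u,v} \<in> E}"
    proof
      assume "2 \<le> card {u\<in>T. {u,v} \<in> E}"
      then have "v \<in> conv_step V E T" using v by (simp add: conv_step_def)
      then show False using fixT v by blast
    qed
    then show "card {u \<in> V - (V - T). {u, v} \<in> E} \<le> 1" using eq by simp
  qed
  then show ?thesis by blast
qed

lemma conv_iff:
  assumes "finite V"
  shows "is_2_conversion_set V E S \<longleftrightarrow> S \<subseteq> V \<and> (\<nexists>U. blocking V E S U)"
proof
  assume c: "is_2_conversion_set V E S"
  then have SV: "S \<subseteq> V" unfolding is_2_conversion_set_def by blast
  then show "S \<subseteq> V \<and> (\<nexists>U. blocking V E S U)"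
    using blocking_not_conv[OF assms _ SV] c by blast
next
  assume "S \<subseteq> V \<and> (\<nexists>U. blocking V E S U)"
  then show "is_2_conversion_set V E S" using not_conv_blocking[OF assms] by blast
qed


lemma peel:
  fixes E :: "'a set set"
  assumes "finite U" "U \<noteq> {}"
    and noloop: "\<forall>v. {v} \<notin> E"
    and deg: "\<forall>v\<in>U. v \<noteq> x \<longrightarrow> card {u\<in>U. {u,v} \<in> E} \<ge> 2"
    and degx: "x \<in> U \<longrightarrow> card {u\<in>U. {u,x} \<in> E} \<ge> 1"
  shows "\<exists>W\<subseteq>U. W \<noteq> {} \<and> (\<forall>v\<in>W. card {u\<in>W. {u,v} \<in> E} \<ge> 2)"
  using assms
proof (induction "card U" arbitrary: U x rule: less_induct)
  case less
  show ?case
  proof (cases "x \<in> U \<and> card {u\<in>U. {u,x} \<in> E} < 2")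
    case False
    have "\<forall>v\<in>U. card {u\<in>U. {u,v} \<in> E} \<ge> 2"
    proof
      fix v assume vU: "v \<in> U"
      show "card {u\<in>U. {u,v} \<in> E} \<ge> 2"
      proof (cases "v = x")
        case True then show ?thesis using False vU by simp
      next
        case False then show ?thesis using less.prems(4) vU by blast
      qed
    qed
    then show ?thesis using less.prems by blast
  next
    case True
    then have xU: "x \<in> U" by blast
    have c1: "card {u\<in>U. {u,x} \<in> E} = 1" using True less.prems(5)[rule_format, OF xU] by linarith
    obtain y where Y: "{u\<in>U. {u,x} \<in> E} = {y}" using c1 card_1_singletonE by blast
    have yU: "y \<in> U" and yx: "{y,x} \<in> E" using Y by auto
    have yne: "y \<noteq> x"
    proof
      assume "y = x" then have "{x} \<in> E" using yx by simp
      then show False using less.prems(3) by blast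
    qed
    define U' where "U' = U - {x}"
    have cardlt: "card U' < card U" using card_Diff1_less[OF less.prems(1) xU] U'_def by simp
    have fin': "finite U'" using less.prems(1) U'_def by simp
    have ne': "U' \<noteq> {}" using yU yne U'_def by blast
    have deg': "\<forall>v\<in>U'. v \<noteq> y \<longrightarrow> card {u\<in>U'. {u,v} \<in> E} \<ge> 2"
    proof (intro ballI impI)
      fix v assume v: "v \<in> U'" "v \<noteq> y"
      have "{x,v} \<notin> E"
      proof
        assume "{x,v} \<in> E"
        then have "{v,x} \<in> E" by (simp add: insert_commute)
        moreover have "v \<in> U" using v U'_def by blast
        ultimately have "v \<in> {u\<in>U. {u,x} \<in> E}" by blast
        then show False using Y v(2) by blast
      qed
      then have "{u\<in>U'. {u,v} \<in> E} = {u\<in>U. {u,v} \<in> E}" unfolding U'_def by blast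
      moreover have "card {u\<in>U. {u,v} \<in> E} \<ge> 2" using less.prems(4) v U'_def by blast
      ultimately show "card {u\<in>U'. {u,v} \<in> E} \<ge> 2" by simp
    qed
    have degy: "y \<in> U' \<longrightarrow> card {u\<in>U'. {u,y} \<in> E} \<ge> 1"
    proof
      assume "y \<in> U'"
      have eq: "{u\<in>U'. {u,y} \<in> E} = {u\<in>U. {u,y} \<in> E} - {x}" unfolding U'_def by blast
      have "card {u\<in>U. {u,y} \<in> E} \<ge> 2" using less.prems(4) yU yne by blast
      then show "card {u\<in>U'. {u,y} \<in> E} \<ge> 1" unfolding eq
        by (simp add: card_Diff_singleton_if del: One_nat_def) linarith
    qed
    obtain W where "W \<subseteq> U'" "W \<noteq> {}" "\<forall>v\<in>W. card {u\<in>W. {u,v} \<in> E} \<ge> 2"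
      using less.hyps[OF cardlt fin' ne' less.prems(3) deg' degy] by blast
    then show ?thesis using U'_def by blast
  qed
qed




lemma adj_sym: "adj V E u v \<Longrightarrow> adj V E v u" by (auto simp: adj_def insert_commute)

lemma rtr_sym: "(adj V E)\<^sup>*\<^sup>* u v \<Longrightarrow> (adj V E)\<^sup>*\<^sup>* v u"
proof (induction rule: rtranclp.induct)
  case (rtrancl_refl a) then show ?case by simp
next
  case (rtrancl_into_rtrancl a b c)
  then show ?case using adj_sym converse_rtranclp_into_rtranclp by metis
qed

lemma rtr_V: "(adj V E)\<^sup>*\<^sup>* u v \<Longrightarrow> u \<in> V \<Longrightarrow> v \<in> V"
  by (induction rule: rtranclp.induct) (auto simp: adj_def)

lemma comp_sub: "C \<in> components V E \<Longrightarrow> C \<subseteq> V"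
  by (auto simp: components_def reachable_def dest: rtr_V)

lemma comp_cover: "x \<in> V \<Longrightarrow> \<exists>C\<in>components V E. x \<in> C"
  unfolding components_def reachable_def by blast

lemma comp_reach: "C \<in> components V E \<Longrightarrow> u \<in> C \<Longrightarrow> v \<in> C \<Longrightarrow> (adj V E)\<^sup>*\<^sup>* u v"
  unfolding components_def reachable_def
  by (auto intro: rtranclp_trans rtr_sym)

lemma comp_eq: "C \<in> components V E \<Longrightarrow> D \<in> components V E \<Longrightarrow> y \<in> C \<Longrightarrow> y \<in> D \<Longrightarrow> C = D"
proof -
  assume C: "C \<in> components V E" and D: "D \<in> components V E" and "y \<in> C" "y \<in> D"
  obtain x1 where x1: "x1 \<in> V" "C = {y. reachable V E x1 y}" using C by (auto simp: components_def)
  obtain x2 where x2: "x2 \<in> V" "D = {y. reachable V E x2 y}" using D by (auto simp: components_def)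
  have r1: "(adj V E)\<^sup>*\<^sup>* x1 y" and r2: "(adj V E)\<^sup>*\<^sup>* x2 y"
    using \<open>y \<in> C\<close> \<open>y \<in> D\<close> x1 x2 by (auto simp: reachable_def)
  have a: "(adj V E)\<^sup>*\<^sup>* x1 x2" using r1 rtr_sym[OF r2] by (rule rtranclp_trans)
  have b: "(adj V E)\<^sup>*\<^sup>* x2 x1" using rtr_sym[OF a] .
  show "C = D" unfolding x1 x2 reachable_def using a b x1 x2
    by (auto intro: rtranclp_trans)
qed

lemma comp_closed: "C \<in> components V E \<Longrightarrow> u \<in> C \<Longrightarrow> adj V E u v \<Longrightarrow> v \<in> C"
  unfolding components_def reachable_def
  by (auto intro: rtranclp.rtrancl_into_rtrancl)

lemma same_comp_not_bridge:
  assumes br: "is_bridge V E e" and e: "e = {a,b}" and C: "C \<in> components V (E - {e})"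
    and aC: "a \<in> C" and bC: "b \<in> C"
  shows False
proof -
  let ?R = "adj V E" and ?R' = "adj V (E - {e})"
  have ab: "?R'\<^sup>*\<^sup>* a b" using comp_reach[OF C aC bC] .
  have ba: "?R'\<^sup>*\<^sup>* b a" using rtr_sym[OF ab] .
  have step: "?R'\<^sup>*\<^sup>* u v" if "?R u v" for u v
  proof (cases "{u,v} = e")
    case True
    then have "(u = a \<and> v = b) \<or> (u = b \<and> v = a)" using e by (auto simp: doubleton_eq_iff)
    then show ?thesis using ab ba by auto
  next
    case False
    then have "?R' u v" using that by (auto simp: adj_def)
    then show ?thesis by simp
  qed
  have sub: "?R\<^sup>*\<^sup>* u v \<Longrightarrow> ?R'\<^sup>*\<^sup>* u v" for u v
  proof (induction rule: rtranclp.induct)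
    case (rtrancl_refl a) then show ?case by simp
  next
    case (rtrancl_into_rtrancl a b c)
    then show ?case using step rtranclp_trans by metis
  qed
  have sup: "?R'\<^sup>*\<^sup>* u v \<Longrightarrow> ?R\<^sup>*\<^sup>* u v" for u v
  proof -
    assume "?R'\<^sup>*\<^sup>* u v"
    moreover have "?R' \<le> ?R" by (auto simp: adj_def)
    ultimately show ?thesis using rtranclp_mono by blast
  qed
  have "reachable V E = reachable V (E - {e})"
    using sub sup by (auto simp: reachable_def fun_eq_iff)
  then have "components V E = components V (E - {e})" by (simp add: components_def)
  then show False using br by (simp add: is_bridge_def)
qed



lemma simple_sub: "simple_graph V E \<Longrightarrow> f \<in> E \<Longrightarrow> f \<subseteq> V"
  by (auto simp: simple_graph_def)

lemma simple_noloop: "simple_graph V E \<Longrightarrow> {v} \<notin> E"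
  by (auto simp: simple_graph_def doubleton_eq_iff)

lemma restrict_conv:
  assumes cub: "cubic V E" and e: "e = {a,b}" and eE: "e \<in> E" and aH: "a \<in> H" and bH: "b \<notin> H"
    and HV: "H \<subseteq> V"
    and clos: "\<forall>u v. u \<in> H \<longrightarrow> {u,v} \<in> E - {e} \<longrightarrow> v \<in> H"
    and conv: "is_2_conversion_set V E S"
  shows "is_2_conversion_set H (induced_edges (E - {e}) H) (S \<inter> H)"
proof -
  let ?E1 = "induced_edges (E - {e}) H"
  have sg: "simple_graph V E" using cub by (simp add: cubic_def)
  have finV: "finite V" using sg by (simp add: simple_graph_def)
  have finH: "finite H" using finV HV finite_subset by blast
  have SV: "S \<subseteq> V" using conv by (simp add: is_2_conversion_set_def)
  have noblockG: "\<nexists>U. blocking V E S U" using conv conv_iff[OF finV] by blast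
  define N where "N v = {u\<in>V. {u,v} \<in> E}" for v
  have cardN: "v \<in> V \<Longrightarrow> card (N v) = 3" for v
    using cub by (simp add: cubic_def degree_def N_def)
  have finN: "finite (N v)" for v using finV by (simp add: N_def)
  have bV: "b \<in> V" using simple_sub[OF sg eE] e by auto
  have ab: "a \<noteq> b" using aH bH by auto
  have degH: "card {u\<in>H. {u,v} \<in> ?E1} = (if v = a then 2 else 3)" if vH: "v \<in> H" for v
  proof (cases "v = a")
    case False
    have "{u\<in>H. {u,v} \<in> ?E1} = N v"
    proof
      show "{u\<in>H. {u,v} \<in> ?E1} \<subseteq> N v" using HV by (auto simp: N_def induced_edges_def)
    next
      show "N v \<subseteq> {u\<in>H. {u,v} \<in> ?E1}"
      proof
        fix u assume u: "u \<in> N v"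
        have ne: "{u,v} \<noteq> e"
        proof
          assume "{u,v} = e"
          then have "v \<in> {a,b}" using e by auto
          then show False using False vH bH by auto
        qed
        then have "{v,u} \<in> E - {e}" using u by (auto simp: N_def insert_commute)
        then have "u \<in> H" using clos vH by blast
        then show "u \<in> {u\<in>H. {u,v} \<in> ?E1}" using u ne vH by (auto simp: N_def induced_edges_def)
      qed
    qed
    then show ?thesis using False cardN vH HV by auto
  next
    case True
    have "{u\<in>H. {u,v} \<in> ?E1} = N v - {b}"
    proof
      show "{u\<in>H. {u,v} \<in> ?E1} \<subseteq> N v - {b}" using HV bH by (auto simp: N_def induced_edges_def)
    next
      show "N v - {b} \<subseteq> {u\<in>H. {u,v} \<in> ?E1}"
      proof
        fix u assume u: "u \<in> N v - {b}"
        have ne: "{u,v} \<noteq> e"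
        proof
          assume "{u,v} = e"
          then have "u = b" using e True ab by (auto simp: doubleton_eq_iff)
          then show False using u by auto
        qed
        then have "{v,u} \<in> E - {e}" using u by (auto simp: N_def insert_commute)
        then have "u \<in> H" using clos vH by blast
        then show "u \<in> {u\<in>H. {u,v} \<in> ?E1}" using u ne vH by (auto simp: N_def induced_edges_def)
      qed
    qed
    moreover have "b \<in> N v" using True bV eE e by (auto simp: N_def insert_commute)
    moreover have "card (N a) = 3" using cardN aH HV by blast
    ultimately show ?thesis using True finN by (simp add: card_Diff_singleton)
  qed
  have "\<nexists>U. blocking H ?E1 (S \<inter> H) U"
  proof
    assume "\<exists>U. blocking H ?E1 (S \<inter> H) U"
    then obtain U where U: "U \<noteq> {}" "U \<subseteq> H - S \<inter> H"
      and Ub: "\<forall>v\<in>U. card {u\<in>H - U. {u,v} \<in> ?E1} \<le> 1"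
      by (auto simp: blocking_def)
    have finU: "finite U" using U finH finite_subset by blast
    have degU: "card {u\<in>U. {u,v} \<in> ?E1} + 1 \<ge> (if v = a then 2 else 3)" if v: "v \<in> U" for v
    proof -
      have "{u\<in>H. {u,v} \<in> ?E1} = {u\<in>U. {u,v} \<in> ?E1} \<union> {u\<in>H - U. {u,v} \<in> ?E1}" using U by blast
      then have "card {u\<in>H. {u,v} \<in> ?E1} \<le> card {u\<in>U. {u,v} \<in> ?E1} + card {u\<in>H - U. {u,v} \<in> ?E1}"
        by (metis (no_types, lifting) card_Un_le)
      moreover have "card {u\<in>H - U. {u,v} \<in> ?E1} \<le> 1" using Ub v by blast
      moreover have "v \<in> H" using v U by blast
      ultimately show ?thesis using degH[of v] by (cases "v = a") auto
    qed
    have d1: "\<forall>v\<in>U. v \<noteq> a \<longrightarrow> card {u\<in>U. {u,v} \<in> ?E1} \<ge> 2"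
    proof (intro ballI impI)
      fix v assume "v \<in> U" "v \<noteq> a"
      then show "card {u\<in>U. {u,v} \<in> ?E1} \<ge> 2" using degU[of v] by simp
    qed
    have d2: "a \<in> U \<longrightarrow> card {u\<in>U. {u,a} \<in> ?E1} \<ge> 1"
    proof
      assume "a \<in> U"
      then show "card {u\<in>U. {u,a} \<in> ?E1} \<ge> 1" using degU[of a] by simp
    qed
    have noloop: "\<forall>v. {v} \<notin> ?E1" using simple_noloop[OF sg] by (auto simp: induced_edges_def)
    obtain W where W: "W \<subseteq> U" "W \<noteq> {}" "\<forall>v\<in>W. card {u\<in>W. {u,v} \<in> ?E1} \<ge> 2"
      using peel[OF finU U(1) noloop d1 d2] by blast
    have "blocking V E S W"
      unfolding blocking_def
    proof (intro conjI ballI)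
      show "W \<noteq> {}" by (rule W(2))
      show "W \<subseteq> V - S" using W U HV by blast
      fix v assume v: "v \<in> W"
      have vV: "v \<in> V" using v W U HV by blast
      let ?W' = "{u\<in>W. {u,v} \<in> ?E1}"
      have W'N: "?W' \<subseteq> N v" using W U HV by (auto simp: N_def induced_edges_def)
      have "{u\<in>V - W. {u,v} \<in> E} \<subseteq> N v - ?W'" by (auto simp: N_def)
      then have "card {u\<in>V - W. {u,v} \<in> E} \<le> card (N v - ?W')"
        using finN by (meson card_mono finite_Diff)
      also have "\<dots> = card (N v) - card ?W'"
        using W'N finN by (meson card_Diff_subset finite_subset)
      also have "\<dots> \<le> 1" using cardN[OF vV] W(3) v by auto
      finally show "card {u\<in>V - W. {u,v} \<in> E} \<le> 1" .
    qed
    then show False using noblockG by blast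
  qed
  then show ?thesis using conv_iff[OF finH] by blast
qed

lemma blocking_restrict:
  assumes finV: "finite V" and b: "blocking V E S U" and HV: "H \<subseteq> V" and ne: "U \<inter> H \<noteq> {}"
    and SH: "SH \<subseteq> S" and E'E: "E' \<subseteq> E"
  shows "blocking H (induced_edges E' H) SH (U \<inter> H)"
  unfolding blocking_def
proof (intro conjI ballI)
  show "U \<inter> H \<noteq> {}" by (rule ne)
  show "U \<inter> H \<subseteq> H - SH" using b SH by (auto simp: blocking_def)
  fix v assume v: "v \<in> U \<inter> H"
  have "{u\<in>H - U \<inter> H. {u,v} \<in> induced_edges E' H} \<subseteq> {u\<in>V - U. {u,v} \<in> E}"
    using HV E'E by (auto simp: induced_edges_def)
  then have "card {u\<in>H - U \<inter> H. {u,v} \<in> induced_edges E' H} \<le> card {u\<in>V - U. {u,v} \<in> E}"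
    using finV by (intro card_mono) auto
  also have "\<dots> \<le> 1" using b v by (auto simp: blocking_def)
  finally show "card {u\<in>H - U \<inter> H. {u,v} \<in> induced_edges E' H} \<le> 1" .
qed

lemma union_conv:
  assumes finV: "finite V" and cover: "V = H1 \<union> H2"
    and c1: "is_2_conversion_set H1 (induced_edges E' H1) S1"
    and c2': "is_2_conversion_set H2 (induced_edges E' H2) S2"
    and E'E: "E' \<subseteq> E"
  shows "is_2_conversion_set V E (S1 \<union> S2)"
proof -
  have fin1: "finite H1" and fin2: "finite H2" using finV cover by auto
  have S: "S1 \<union> S2 \<subseteq> V" using c1 c2' cover by (auto simp: is_2_conversion_set_def)
  have "\<nexists>U. blocking V E (S1 \<union> S2) U"
  proof
    assume "\<exists>U. blocking V E (S1 \<union> S2) U"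
    then obtain U where b: "blocking V E (S1 \<union> S2) U" by blast
    then have "U \<inter> H1 \<noteq> {} \<or> U \<inter> H2 \<noteq> {}" using cover by (auto simp: blocking_def)
    then show False
    proof
      assume "U \<inter> H1 \<noteq> {}"
      then have "blocking H1 (induced_edges E' H1) S1 (U \<inter> H1)"
        using blocking_restrict[OF finV b _ _ _ E'E] cover by blast
      then show False using c1 conv_iff[OF fin1] by blast
    next
      assume "U \<inter> H2 \<noteq> {}"
      then have "blocking H2 (induced_edges E' H2) S2 (U \<inter> H2)"
        using blocking_restrict[OF finV b _ _ _ E'E] cover by blast
      then show False using c2' conv_iff[OF fin2] by blast
    qed
  qed
  then show ?thesis using S conv_iff[OF finV] by blast
qed

lemma c2_le: "is_2_conversion_set V E S \<Longrightarrow> c2 V E \<le> card S"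
  unfolding c2_def by (rule Least_le) blast

lemma c2_ex: "\<exists>S. is_2_conversion_set V E S \<and> card S = c2 V E"
  unfolding c2_def
proof (rule LeastI_ex)
  have "is_2_conversion_set V E V"
    unfolding is_2_conversion_set_def by (auto intro: exI[of _ 0])
  then show "\<exists>n S. is_2_conversion_set V E S \<and> card S = n" by blast
qed



theorem lemma5p4:
  fixes V :: "'a set" and E :: "'a set set" and e :: "'a set" and H1 H2 :: "'a set"
  assumes "cubic V E"
    and "is_bridge V E e"
    and "components V (E - {e}) = {H1, H2}"
    and "H1 \<noteq> H2"
  shows "c2 V E = c2 H1 (induced_edges (E - {e}) H1) + c2 H2 (induced_edges (E - {e}) H2)"
proof -
  note cub = assms(1) and br = assms(2) and comps = assms(3) and neq = assms(4)
  have sg: "simple_graph V E" using cub by (simp add: cubic_def)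
  have finV: "finite V" using sg by (simp add: simple_graph_def)
  have eE: "e \<in> E" using br by (simp add: is_bridge_def)
  obtain a b where e: "e = {a,b}" and abV: "a \<in> V" "b \<in> V"
    using sg eE by (auto simp: simple_graph_def)
  have H1c: "H1 \<in> components V (E - {e})" and H2c: "H2 \<in> components V (E - {e})"
    using comps by auto
  have H1V: "H1 \<subseteq> V" and H2V: "H2 \<subseteq> V" using comp_sub H1c H2c by auto
  have cover: "V = H1 \<union> H2"
  proof
    show "V \<subseteq> H1 \<union> H2" using comp_cover[of _ V "E - {e}"] comps by blast
    show "H1 \<union> H2 \<subseteq> V" using H1V H2V by blast
  qed
  have disj: "H1 \<inter> H2 = {}" using comp_eq[OF H1c H2c] neq by blast
  have clos: "\<forall>u v. u \<in> H \<longrightarrow> {u,v} \<in> E - {e} \<longrightarrow> v \<in> H"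
    if Hc: "H \<in> components V (E - {e})" for H
  proof (intro allI impI)
    fix u v assume u: "u \<in> H" and uv: "{u,v} \<in> E - {e}"
    have "u \<in> V" using u comp_sub[OF Hc] by blast
    moreover have "v \<in> V" using simple_sub[OF sg] uv by blast
    ultimately have "adj V (E - {e}) u v" using uv by (simp add: adj_def)
    then show "v \<in> H" using comp_closed[OF Hc u] by blast
  qed
  have not1: "\<not> (a \<in> H1 \<and> b \<in> H1)" using same_comp_not_bridge[OF br e H1c] by blast
  have not2: "\<not> (a \<in> H2 \<and> b \<in> H2)" using same_comp_not_bridge[OF br e H2c] by blast
  have E'E: "E - {e} \<subseteq> E" by blast
  have le: "c2 V E \<le> c2 H1 (induced_edges (E - {e}) H1) + c2 H2 (induced_edges (E - {e}) H2)"
  proof -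
    obtain S1 where S1: "is_2_conversion_set H1 (induced_edges (E - {e}) H1) S1"
      "card S1 = c2 H1 (induced_edges (E - {e}) H1)" using c2_ex by blast
    obtain S2 where S2: "is_2_conversion_set H2 (induced_edges (E - {e}) H2) S2"
      "card S2 = c2 H2 (induced_edges (E - {e}) H2)" using c2_ex by blast
    have "is_2_conversion_set V E (S1 \<union> S2)" using union_conv[OF finV cover S1(1) S2(1) E'E] .
    then have "c2 V E \<le> card (S1 \<union> S2)" by (rule c2_le)
    also have "\<dots> \<le> card S1 + card S2" by (rule card_Un_le)
    finally show ?thesis using S1 S2 by simp
  qed
  have ge: "c2 H1 (induced_edges (E - {e}) H1) + c2 H2 (induced_edges (E - {e}) H2) \<le> c2 V E"
  proof -
    obtain S where S: "is_2_conversion_set V E S" "card S = c2 V E" using c2_ex by blast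
    have c1: "is_2_conversion_set H1 (induced_edges (E - {e}) H1) (S \<inter> H1)"
     and c2: "is_2_conversion_set H2 (induced_edges (E - {e}) H2) (S \<inter> H2)"
    proof -
      have "(a \<in> H1 \<and> b \<in> H2) \<or> (a \<in> H2 \<and> b \<in> H1)" using abV cover not1 not2 by blast
      then have "is_2_conversion_set H1 (induced_edges (E - {e}) H1) (S \<inter> H1) \<and>
                 is_2_conversion_set H2 (induced_edges (E - {e}) H2) (S \<inter> H2)"
      proof
        assume ab: "a \<in> H1 \<and> b \<in> H2"
        have e': "e = {b,a}" using e by (simp add: insert_commute)
        show ?thesis
          using restrict_conv[OF cub e eE _ _ H1V clos[OF H1c] S(1)]
                restrict_conv[OF cub e' eE _ _ H2V clos[OF H2c] S(1)] ab disj by blast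
      next
        assume ab: "a \<in> H2 \<and> b \<in> H1"
        have e': "e = {b,a}" using e by (simp add: insert_commute)
        show ?thesis
          using restrict_conv[OF cub e eE _ _ H2V clos[OF H2c] S(1)]
                restrict_conv[OF cub e' eE _ _ H1V clos[OF H1c] S(1)] ab disj by blast
      qed
      then show "is_2_conversion_set H1 (induced_edges (E - {e}) H1) (S \<inter> H1)"
        "is_2_conversion_set H2 (induced_edges (E - {e}) H2) (S \<inter> H2)" by auto
    qed
    have SV: "S \<subseteq> V" using S(1) by (simp add: is_2_conversion_set_def)
    have "card S = card ((S \<inter> H1) \<union> (S \<inter> H2))" using SV cover
      by (metis Int_Un_distrib Int_absorb2)
    also have "\<dots> = card (S \<inter> H1) + card (S \<inter> H2)"
      using disj finV SV by (intro card_Un_disjoint) (auto intro: finite_subset)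
    finally show ?thesis using c2_le[OF c1] c2_le[OF c2] S(2) by linarith
  qed
  show ?thesis using le ge by linarith
qed


end
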